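(* If $T'$ is a subtree of a subcubic tree $T$, then $\gamma_e(T')\le\gamma_e(T)$.
   Context: All graphs are finite, simple and undirected; subcubic means maximum degree at most $3$; a subtree is a connected subgraph (a tree) of $T$. For a graph $G$ and $D\subseteq V(G)$, and vertices $u,v$, let $\mathrm{dist}_{(G,D)}(u,v)$ be the minimum number of edges of a path $P$ in $G$ between $u$ and $v$ such that $D$ contains exactly one endvertex of $P$ and no internal vertex of $P$ ($\infty$ if no such path exists; in particular $\mathrm{dist}_{(G,D)}(u,u)=0$ for $u\in D$). Let $w_{(G,D)}(u)=\sum_{v\in D}\left(\frac12\right)^{\mathrm{dist}_{(G,D)}(u,v)-1}$ with $\left(\frac12\right)^\infty=0$. $D$ is an exponential dominating set if $w_{(G,D)}(u)\ge 1$ for every $u\in V(G)$, and $\gamma_e(G)$ is the minimum size of an exponential dominating set. *)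

theory Defs
  imports Complex_Main "HOL-Library.Extended_Nat"
begin

record 'a graph =
  verts :: "'a set"
  edges :: "('a \<times> 'a) set"

definition wf_graph :: "'a graph \<Rightarrow> bool" where
  "wf_graph G \<longleftrightarrow> finite (verts G) \<and> edges G \<subseteq> verts G \<times> verts G
     \<and> sym (edges G) \<and> irrefl (edges G)"

definition subcubic :: "'a graph \<Rightarrow> bool" where
  "subcubic G \<longleftrightarrow> (\<forall>v\<in>verts G. card {u. (v, u) \<in> edges G} \<le> 3)"

definition gpath :: "'a graph \<Rightarrow> 'a list \<Rightarrow> bool" where
  "gpath G xs \<longleftrightarrow> xs \<noteq> [] \<and> distinct xs \<and> set xs \<subseteq> verts G
     \<and> (\<forall>i. Suc i < length xs \<longrightarrow> (xs ! i, xs ! Suc i) \<in> edges G)"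

definition connected_graph :: "'a graph \<Rightarrow> bool" where
  "connected_graph G \<longleftrightarrow>
     (\<forall>u\<in>verts G. \<forall>v\<in>verts G. \<exists>xs. gpath G xs \<and> hd xs = u \<and> last xs = v)"

definition acyclic_graph :: "'a graph \<Rightarrow> bool" where
  "acyclic_graph G \<longleftrightarrow>
     \<not> (\<exists>xs. gpath G xs \<and> length xs \<ge> 3 \<and> (last xs, hd xs) \<in> edges G)"

definition is_tree :: "'a graph \<Rightarrow> bool" where
  "is_tree G \<longleftrightarrow> wf_graph G \<and> verts G \<noteq> {} \<and> connected_graph G \<and> acyclic_graph G"

definition subgraph :: "'a graph \<Rightarrow> 'a graph \<Rightarrow> bool" where
  "subgraph H G \<longleftrightarrow> wf_graph H \<and> verts H \<subseteq> verts G \<and> edges H \<subseteq> edges G"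

definition subtree :: "'a graph \<Rightarrow> 'a graph \<Rightarrow> bool" where
  "subtree H T \<longleftrightarrow> subgraph H T \<and> is_tree H"

definition dpath :: "'a graph \<Rightarrow> 'a set \<Rightarrow> 'a \<Rightarrow> 'a \<Rightarrow> 'a list \<Rightarrow> bool" where
  "dpath G D u v xs \<longleftrightarrow> gpath G xs \<and> hd xs = u \<and> last xs = v
     \<and> card ({hd xs, last xs} \<inter> D) = 1
     \<and> set (butlast (tl xs)) \<inter> D = {}"

definition ddist :: "'a graph \<Rightarrow> 'a set \<Rightarrow> 'a \<Rightarrow> 'a \<Rightarrow> enat" where
  "ddist G D u v = (INF xs \<in> {xs. dpath G D u v xs}. enat (length xs - 1))"

definition dweight :: "'a graph \<Rightarrow> 'a set \<Rightarrow> 'a \<Rightarrow> real" where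
  "dweight G D u = (\<Sum>v\<in>D. (case ddist G D u v of
       enat d \<Rightarrow> (1/2::real) powi (int d - 1)
     | \<infinity> \<Rightarrow> 0))"

definition exp_dominating :: "'a graph \<Rightarrow> 'a set \<Rightarrow> bool" where
  "exp_dominating G D \<longleftrightarrow> D \<subseteq> verts G \<and> (\<forall>u\<in>verts G. dweight G D u \<ge> 1)"

definition gamma_e :: "'a graph \<Rightarrow> nat" where
  "gamma_e G = Min (card ` {D. exp_dominating G D})"

end

theory Submission
  imports Defs
begin


lemma gpath_succ: "gpath G xs \<longleftrightarrow> xs \<noteq> [] \<and> distinct xs \<and> set xs \<subseteq> verts G
   \<and> successively (\<lambda>a b. (a,b) \<in> edges G) xs"
  unfolding gpath_def successively_conv_nth by auto

lemma distinct_hd_last: "distinct ys \<Longrightarrow> ys \<noteq> [] \<Longrightarrow> hd ys = last ys \<Longrightarrow> ys = [hd ys]"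
  by (cases ys) (auto split: if_splits)

lemma path_unique:
  assumes wf: "wf_graph G" and ac: "acyclic_graph G"
  shows "gpath G xs \<Longrightarrow> gpath G ys \<Longrightarrow> hd xs = hd ys \<Longrightarrow> last xs = last ys \<Longrightarrow> xs = ys"
proof (induction xs arbitrary: ys)
  case Nil then show ?case by (simp add: gpath_def)
next
  case (Cons a xs')
  have sy: "sym (edges G)" using wf by (simp add: wf_graph_def)
  obtain ys' where ys: "ys = a # ys'" using Cons.prems by (cases ys) (auto simp: gpath_def)
  show ?case
  proof (cases "xs' = []")
    case True
    then show ?thesis using Cons.prems ys distinct_hd_last[of ys] by (auto simp: gpath_def)
  next
    case xne: False
    have yne: "ys' \<noteq> []"
    proof
      assume "ys' = []"
      then have "last xs' = a" using Cons.prems ys xne by simp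
      then show False using xne Cons.prems(1) by (auto simp: gpath_def)
    qed
    have gx': "gpath G xs'" using Cons.prems(1) xne by (auto simp: gpath_succ successively_Cons)
    have gy': "gpath G ys'" using Cons.prems(2) yne ys by (auto simp: gpath_succ successively_Cons)
    have ll: "last xs' = last ys'" using Cons.prems(4) ys xne yne by simp
    show ?thesis
    proof (cases "hd xs' = hd ys'")
      case True
      then show ?thesis using Cons.IH[OF gx' gy' True ll] ys by simp
    next
      case False
      have "\<exists>z\<in>set xs'. z \<in> set ys'" using ll xne yne by (metis last_in_set)
      then obtain p z r where xs'd: "xs' = p @ z # r" and zin: "z \<in> set ys'"
        and pn: "\<forall>w\<in>set p. w \<notin> set ys'"
        using split_list_first_prop[of xs' "\<lambda>w. w \<in> set ys'"] by blast
      obtain q s where ys'd: "ys' = q @ z # s" using zin split_list by metis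
      define cyc where "cyc = a # p @ z # rev q"
      have dx: "distinct (a # p @ z # r)" using Cons.prems(1) xs'd by (simp add: gpath_def)
      have dy: "distinct (a # q @ z # s)" using Cons.prems(2) ys ys'd by (simp add: gpath_def)
      have "distinct cyc" using dx dy pn ys'd unfolding cyc_def by auto
      moreover have "set cyc \<subseteq> verts G" using Cons.prems(1,2) xs'd ys ys'd
        unfolding cyc_def gpath_def by auto
      moreover have "successively (\<lambda>a b. (a,b) \<in> edges G) cyc"
      proof -
        have s1: "successively (\<lambda>a b. (a,b) \<in> edges G) ((a # p @ [z]) @ r)"
          using Cons.prems(1) xs'd by (simp add: gpath_succ)
        have s2: "successively (\<lambda>a b. (a,b) \<in> edges G) ((a # q @ [z]) @ s)"
          using Cons.prems(2) ys ys'd by (simp add: gpath_succ)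
        have t1: "successively (\<lambda>a b. (a,b) \<in> edges G) (a # p @ [z])"
          using s1 successively_append_iff by blast
        have t2: "successively (\<lambda>a b. (a,b) \<in> edges G) (q @ [z])"
          using s2 successively_append_iff[of _ "[a]" "q @ [z] @ s"] successively_append_iff[of _ "q @ [z]" s]
          by auto
        have t2': "successively (\<lambda>a b. (a,b) \<in> edges G) (rev (q @ [z]))"
          unfolding successively_rev
          by (rule successively_mono[OF t2]) (use sy in \<open>auto simp: sym_def\<close>)
        have t3: "successively (\<lambda>a b. (a,b) \<in> edges G) (z # rev q)" using t2' by simp
        have eq: "a # p @ z # rev q = (a # p) @ (z # rev q)" by simp
        have t4: "successively (\<lambda>a b. (a,b) \<in> edges G) (a # p)"
          using t1 successively_append_iff[of _ "a # p" "[z]"] by simp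
        have "(last (a # p), z) \<in> edges G"
          using t1 successively_append_iff[of _ "a # p" "[z]"] by simp
        then show ?thesis unfolding cyc_def eq successively_append_iff
          using t3 t4 by simp
      qed
      ultimately have gc: "gpath G cyc" unfolding gpath_succ cyc_def by simp
      have "p \<noteq> [] \<or> q \<noteq> []" using False xs'd ys'd by auto
      then have lc: "length cyc \<ge> 3" unfolding cyc_def by (auto simp: Suc_le_eq)
      have "last cyc = hd ys'" unfolding cyc_def using ys'd by (cases q) auto
      moreover have "(a, hd ys') \<in> edges G" using Cons.prems(2) ys yne
        by (cases ys') (auto simp: gpath_succ)
      ultimately have "(last cyc, hd cyc) \<in> edges G" using sy unfolding cyc_def by (auto simp: sym_def)
      then show ?thesis using ac gc lc unfolding acyclic_graph_def by blast
    qed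
  qed
qed



definition rem :: "'a graph \<Rightarrow> 'a \<Rightarrow> 'a graph" where
  "rem G x = \<lparr>verts = verts G - {x}, edges = {(a,b). (a,b) \<in> edges G \<and> a \<noteq> x \<and> b \<noteq> x}\<rparr>"

lemma rem_simps[simp]: "verts (rem G x) = verts G - {x}"
  "edges (rem G x) = {(a,b). (a,b) \<in> edges G \<and> a \<noteq> x \<and> b \<noteq> x}"
  by (auto simp: rem_def)

lemma gpath_rem: "gpath (rem G x) xs \<longleftrightarrow> gpath G xs \<and> x \<notin> set xs"
proof
  assume "gpath (rem G x) xs" then show "gpath G xs \<and> x \<notin> set xs"
    unfolding gpath_def by auto
next
  assume a: "gpath G xs \<and> x \<notin> set xs"
  have "\<And>i. Suc i < length xs \<Longrightarrow> xs ! i \<noteq> x \<and> xs ! Suc i \<noteq> x"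
  proof -
    fix i assume "Suc i < length xs"
    then have "xs ! i \<in> set xs" "xs ! Suc i \<in> set xs" by simp_all
    then show "xs ! i \<noteq> x \<and> xs ! Suc i \<noteq> x" using a by blast
  qed
  then show "gpath (rem G x) xs" using a unfolding gpath_def by auto
qed

lemma gpath_take: "gpath G xs \<Longrightarrow> 0 < n \<Longrightarrow> gpath G (take n xs)"
  unfolding gpath_def by (auto dest: in_set_takeD)

lemma gpath_drop: "gpath G xs \<Longrightarrow> n < length xs \<Longrightarrow> gpath G (drop n xs)"
  unfolding gpath_def by (auto dest: in_set_dropD)

lemma leaf_notin:
  assumes wf: "wf_graph G" and lf: "\<And>w. (x,w) \<in> edges G \<longleftrightarrow> w = y"
    and g: "gpath G xs" and h: "hd xs \<noteq> x" and l: "last xs \<noteq> x"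
  shows "x \<notin> set xs"
proof
  assume "x \<in> set xs"
  then obtain i where i: "i < length xs" "xs ! i = x" by (auto simp: in_set_conv_nth)
  have ne: "xs \<noteq> []" using g by (simp add: gpath_def)
  have "i \<noteq> 0" proof assume "i = 0" then show False using i h ne by (simp add: hd_conv_nth) qed
  moreover have "i \<noteq> length xs - 1" using i l ne by (auto simp: last_conv_nth)
  ultimately obtain j where j: "i = Suc j" "Suc i < length xs" using i by (cases i) auto
  have "(xs ! j, x) \<in> edges G" using g j i by (auto simp: gpath_def)
  then have "xs ! j = y" using wf lf by (auto simp: wf_graph_def sym_def)
  moreover have "(x, xs ! Suc i) \<in> edges G" using g j i by (auto simp: gpath_def)
  then have "xs ! Suc i = y" using lf by auto
  ultimately have "xs ! j = xs ! Suc i" by simp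
  moreover have "distinct xs" using g by (simp add: gpath_def)
  ultimately show False using j by (simp add: nth_eq_iff_index_eq)
qed

lemma wf_rem: "wf_graph G \<Longrightarrow> wf_graph (rem G x)"
  unfolding wf_graph_def by (auto simp: sym_def irrefl_def)

lemma tree_rem:
  assumes t: "is_tree G" and xv: "x \<in> verts G" and lf: "\<And>w. (x,w) \<in> edges G \<longleftrightarrow> w = y"
  shows "is_tree (rem G x)"
proof -
  have wf: "wf_graph G" using t by (simp add: is_tree_def)
  have "(x,y) \<in> edges G" using lf by simp
  then have "y \<in> verts G" "y \<noteq> x" using wf by (auto simp: wf_graph_def irrefl_def)
  then have ne: "verts (rem G x) \<noteq> {}" by auto
  have con: "connected_graph (rem G x)"
    unfolding connected_graph_def
  proof (intro ballI)
    fix u v assume "u \<in> verts (rem G x)" "v \<in> verts (rem G x)"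
    then have uv: "u \<in> verts G" "v \<in> verts G" "u \<noteq> x" "v \<noteq> x" by auto
    then obtain xs where "gpath G xs" "hd xs = u" "last xs = v"
      using t by (auto simp: is_tree_def connected_graph_def)
    then show "\<exists>xs. gpath (rem G x) xs \<and> hd xs = u \<and> last xs = v"
      using leaf_notin[OF wf lf] uv by (auto simp: gpath_rem)
  qed
  have "acyclic_graph (rem G x)" using t unfolding is_tree_def acyclic_graph_def
    by (auto simp: gpath_rem)
  then show ?thesis using wf_rem[OF wf] ne con by (simp add: is_tree_def)
qed

lemma subcubic_rem: "wf_graph G \<Longrightarrow> subcubic G \<Longrightarrow> subcubic (rem G x)"
  unfolding subcubic_def
proof (intro ballI)
  fix v assume wf: "wf_graph G" and s: "\<forall>v\<in>verts G. card {u. (v, u) \<in> edges G} \<le> 3"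
    and v: "v \<in> verts (rem G x)"
  have "finite {u. (v, u) \<in> edges G}"
    using wf by (auto simp: wf_graph_def intro: finite_subset[of _ "verts G"])
  then have "card {u. (v, u) \<in> edges (rem G x)} \<le> card {u. (v, u) \<in> edges G}"
    by (intro card_mono) auto
  then show "card {u. (v, u) \<in> edges (rem G x)} \<le> 3" using s v by force
qed

lemma subtree_rem: "subtree H G \<Longrightarrow> x \<notin> verts H \<Longrightarrow> subtree H (rem G x)"
  unfolding subtree_def subgraph_def wf_graph_def by auto



lemma gpath_sub: "subgraph H G \<Longrightarrow> gpath H xs \<Longrightarrow> gpath G xs"
  unfolding subgraph_def gpath_def by auto

lemma spanning_eq:
  assumes t: "is_tree T" and s: "subtree T' T" and v: "verts T' = verts T"
  shows "edges T' = edges T"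
proof
  show "edges T' \<subseteq> edges T" using s by (simp add: subtree_def subgraph_def)
next
  show "edges T \<subseteq> edges T'"
  proof
    fix e assume e: "e \<in> edges T"
    obtain a b where ab: "e = (a,b)" by (cases e)
    have wf: "wf_graph T" and ac: "acyclic_graph T" using t by (auto simp: is_tree_def)
    have "a \<in> verts T" "b \<in> verts T" "a \<noteq> b" using wf e ab by (auto simp: wf_graph_def irrefl_def)
    moreover have "connected_graph T'" using s by (simp add: subtree_def is_tree_def)
    ultimately obtain zs where zs: "gpath T' zs" "hd zs = a" "last zs = b"
      using v unfolding connected_graph_def by blast
    have "gpath T zs" using gpath_sub s zs by (auto simp: subtree_def)
    moreover have "gpath T [a,b]" using e ab \<open>a \<noteq> b\<close> \<open>a \<in> verts T\<close> \<open>b \<in> verts T\<close>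
      by (auto simp: gpath_def nth_Cons split: nat.splits)
    ultimately have "zs = [a,b]" using path_unique[OF wf ac] zs by auto
    then show "e \<in> edges T'" using zs ab by (auto simp: gpath_def)
  qed
qed

lemma graph_eq: "verts G = verts H \<Longrightarrow> edges G = edges H \<Longrightarrow> G = (H :: 'a graph)"
  by (cases G, cases H) simp

lemma leaf_exists:
  assumes t: "is_tree T" and s: "subtree T' T" and ss: "verts T' \<subset> verts T"
  shows "\<exists>x y. x \<in> verts T - verts T' \<and> (\<forall>w. (x,w) \<in> edges T \<longleftrightarrow> w = y)"
proof -
  have wf: "wf_graph T" and ac: "acyclic_graph T" and con: "connected_graph T"
    using t by (auto simp: is_tree_def)
  have fin: "finite (verts T)" using wf by (simp add: wf_graph_def)
  have sy: "sym (edges T)" using wf by (simp add: wf_graph_def)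
  define S where "S = {xs. gpath T xs \<and> hd xs \<notin> verts T' \<and> last xs \<in> verts T'}"
  have "S \<subseteq> {xs. set xs \<subseteq> verts T \<and> length xs \<le> card (verts T)}"
    proof
    fix xs assume "xs \<in> S"
    then have "distinct xs" "set xs \<subseteq> verts T" by (auto simp: S_def gpath_def)
    then show "xs \<in> {xs. set xs \<subseteq> verts T \<and> length xs \<le> card (verts T)}"
      using distinct_card[of xs] card_mono[OF fin, of "set xs"] by simp
  qed
  then have finS: "finite S" using finite_lists_length_le[OF fin] finite_subset by blast
  obtain z where z: "z \<in> verts T" "z \<notin> verts T'" using ss by blast
  obtain v' where v': "v' \<in> verts T'" using s by (auto simp: subtree_def is_tree_def)
  have "v' \<in> verts T" using v' ss by blast
  then obtain zs where "gpath T zs" "hd zs = z" "last zs = v'" using con z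
    by (auto simp: connected_graph_def)
  then have "zs \<in> S" using z v' by (simp add: S_def)
  then have neS: "S \<noteq> {}" by blast
  define m where "m = Max (length ` S)"
  have "m \<in> length ` S" unfolding m_def using finS neS by simp
  then obtain xs where xs: "xs \<in> S" "length xs = m" by blast
  have mx: "\<And>ys. ys \<in> S \<Longrightarrow> length ys \<le> length xs"
    using xs finS unfolding m_def by simp
  have gx: "gpath T xs" and hx: "hd xs \<notin> verts T'" and lx: "last xs \<in> verts T'"
    using xs by (auto simp: S_def)
  have "length xs \<ge> 2"
  proof (rule ccontr)
    assume "\<not> 2 \<le> length xs"
    moreover have "xs \<noteq> []" using gx by (simp add: gpath_def)
    ultimately have "length xs = Suc 0"
    proof -
      have "length xs \<noteq> 0" using \<open>xs \<noteq> []\<close> by simp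
      then show ?thesis using \<open>\<not> 2 \<le> length xs\<close> by linarith
    qed
    then obtain a where "xs = [a]" using length_Suc_conv[of xs 0] by auto
    then show False using hx lx by simp
  qed
  define x where "x = hd xs"
  define y where "y = xs ! 1"
  have x0: "x = xs ! 0" using gx by (simp add: x_def gpath_def hd_conv_nth)
  have xv: "x \<in> verts T" using gx by (auto simp: x_def gpath_def)
  have "\<forall>w. (x,w) \<in> edges T \<longleftrightarrow> w = y"
  proof (intro allI iffI)
    fix w assume "w = y"
    then show "(x,w) \<in> edges T" using gx \<open>length xs \<ge> 2\<close> x0 y_def by (auto simp: gpath_def)
  next
    fix w assume xw: "(x,w) \<in> edges T"
    show "w = y"
    proof (rule ccontr)
      assume wy: "w \<noteq> y"
      have wv: "w \<in> verts T" "w \<noteq> x" using xw wf by (auto simp: wf_graph_def irrefl_def)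
      show False
      proof (cases "w \<in> set xs")
        case True
        then obtain j where j: "j < length xs" "xs ! j = w" by (auto simp: in_set_conv_nth)
        have "j \<noteq> 0" proof assume "j = 0" then show False using j wv x0 by simp qed
        moreover have "j \<noteq> 1" using j wy y_def by auto
        ultimately have j2: "j \<ge> 2" by simp
        define cyc where "cyc = take (Suc j) xs"
        have "gpath T cyc" unfolding cyc_def using gpath_take[OF gx] by simp
        moreover have "length cyc \<ge> 3" using j j2 by (simp add: cyc_def)
        moreover have "last cyc = w" using j by (simp add: cyc_def take_Suc_conv_app_nth)
        moreover have "hd cyc = x" using j by (simp add: cyc_def x_def hd_take)
        ultimately show False using ac xw sy unfolding acyclic_graph_def by (auto simp: sym_def)
      next
        case False
        have gw: "gpath T (w # xs)" using gx False wv xw sy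
          by (auto simp: gpath_succ successively_Cons x_def sym_def)
        show ?thesis
        proof (cases "w \<in> verts T'")
          case False
          then have "w # xs \<in> S" using gw lx gx by (auto simp: S_def gpath_def)
          then show False using mx[of "w#xs"] by simp
        next
          case True
          obtain zs where zs: "gpath T' zs" "hd zs = w" "last zs = last xs"
            using s True lx by (auto simp: subtree_def is_tree_def connected_graph_def)
          have "gpath T zs" using gpath_sub s zs by (auto simp: subtree_def)
          then have "zs = w # xs" using path_unique[OF wf ac _ gw] zs gx
            by (auto simp: gpath_def)
          then have "x \<in> verts T'" using zs x_def gx by (cases xs) (auto simp: gpath_def)
          then show False using hx x_def by simp
        qed
      qed
    qed
  qed
  then show ?thesis using xv hx x_def by blast
qed



definition tm :: "'a graph \<Rightarrow> 'a set \<Rightarrow> 'a \<Rightarrow> 'a \<Rightarrow> real" where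
  "tm G D u v = (case ddist G D u v of enat d \<Rightarrow> (1/2::real) powi (int d - 1) | \<infinity> \<Rightarrow> 0)"

lemma dweight_tm: "dweight G D u = (\<Sum>v\<in>D. tm G D u v)"
  unfolding dweight_def tm_def by simp

lemma tm_nonneg: "tm G D u v \<ge> 0"
  unfolding tm_def by (cases "ddist G D u v") auto

lemma ddist_path:
  assumes wf: "wf_graph G" and ac: "acyclic_graph G" and p: "dpath G D u v xs"
  shows "ddist G D u v = enat (length xs - 1)"
proof -
  have "{xs. dpath G D u v xs} = {xs}"
  proof (rule set_eqI, rule iffI)
    fix ys assume "ys \<in> {xs. dpath G D u v xs}"
    then have "gpath G ys" "hd ys = u" "last ys = v" by (auto simp: dpath_def)
    moreover have "gpath G xs" "hd xs = u" "last xs = v" using p by (auto simp: dpath_def)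
    ultimately show "ys \<in> {xs}" using path_unique[OF wf ac, of ys xs] by simp
  qed (use p in simp)
  then show ?thesis unfolding ddist_def by simp
qed

lemma ddist_none: "\<not> (\<exists>xs. dpath G D u v xs) \<Longrightarrow> ddist G D u v = \<infinity>"
proof -
  assume "\<not> (\<exists>xs. dpath G D u v xs)"
  then have e: "{xs. dpath G D u v xs} = {}" by simp
  show ?thesis unfolding ddist_def e by (simp add: top_enat_def)
qed

lemma tm_none: "\<not> (\<exists>xs. dpath G D u v xs) \<Longrightarrow> tm G D u v = 0"
  unfolding tm_def by (simp add: ddist_none)

lemma tm_path:
  assumes wf: "wf_graph G" and ac: "acyclic_graph G" and p: "dpath G D u v xs"
    and l: "length xs \<ge> 2"
  shows "tm G D u v = (1/2)^(length xs - 2)"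
proof -
  have "int (length xs - 1) - 1 = int (length xs - 2)" using l by simp
  then have eq: "(1/2::real) powi (int (length xs - 1) - 1) = (1/2)^(length xs - 2)"
    by (simp only: power_int_of_nat)
  show ?thesis unfolding tm_def ddist_path[OF wf ac p] using eq by (simp only: enat.case)
qed

lemma tm_self:
  assumes "u \<in> D" "u \<in> verts G"
  shows "tm G D u u = 2"
proof -
  have "dpath G D u u [u]" using assms by (simp add: dpath_def gpath_def)
  then have "ddist G D u u \<le> enat 0" unfolding ddist_def
    by (intro INF_lower2[of "[u]"]) auto
  then have "ddist G D u u = enat 0" by (metis le_zero_eq zero_enat_def)
  then show ?thesis unfolding tm_def by (simp add: power_int_minus)
qed

lemma dweight_self:
  assumes "finite D" "u \<in> D" "u \<in> verts G"
  shows "dweight G D u \<ge> 2"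
proof -
  have "tm G D u u \<le> (\<Sum>v\<in>D. tm G D u v)"
    using assms by (intro member_le_sum) (auto simp: tm_nonneg)
  then show ?thesis using tm_self[OF assms(2,3)] by (simp add: dweight_tm)
qed

definition Qs :: "'a graph \<Rightarrow> 'a set \<Rightarrow> nat \<Rightarrow> 'a \<Rightarrow> 'a \<Rightarrow> 'a list set" where
  "Qs G D k p b = {R. gpath G R \<and> 2 \<le> length R \<and> length R \<le> k \<and> hd R = p \<and> R ! 1 = b
     \<and> last R \<in> D \<and> set (butlast (tl R)) \<inter> D = {}}"

definition gg :: "'a list \<Rightarrow> real" where "gg R = (1/2)^(length R - 2)"

lemma finite_Qs: "wf_graph G \<Longrightarrow> finite (Qs G D k p b)"
proof -
  assume wf: "wf_graph G"
  have "Qs G D k p b \<subseteq> {R. set R \<subseteq> verts G \<and> length R \<le> k}"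
    unfolding Qs_def gpath_def by auto
  moreover have "finite (verts G)" using wf by (simp add: wf_graph_def)
  ultimately show ?thesis using finite_lists_length_le finite_subset by blast
qed

lemma card_nb:
  assumes wf: "wf_graph G" and sc: "subcubic G" and e: "(b,p) \<in> edges G"
  shows "card ({c. (b,c) \<in> edges G} - {p}) \<le> 2"
proof -
  have bv: "b \<in> verts G" using wf e by (auto simp: wf_graph_def)
  have fin: "finite {c. (b,c) \<in> edges G}"
    using wf by (auto simp: wf_graph_def intro: finite_subset[of _ "verts G"])
  have "card {c. (b,c) \<in> edges G} \<le> 3" using sc bv by (auto simp: subcubic_def)
  then show ?thesis using e fin by (simp add: card_Diff_singleton)
qed

lemma kraft:
  assumes wf: "wf_graph G" and sc: "subcubic G"
  shows "(b,p) \<in> edges G \<Longrightarrow> (\<Sum>R\<in>Qs G D k p b. gg R) \<le> 1"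
proof (induction k arbitrary: p b)
  case 0
  have "Qs G D 0 p b = {}" by (auto simp: Qs_def)
  then show ?case by simp
next
  case (Suc k)
  have sy: "sym (edges G)" using wf by (simp add: wf_graph_def)
  show ?case
  proof (cases "b \<in> D")
    case True
    have "Qs G D (Suc k) p b \<subseteq> {[p,b]}"
    proof
      fix R assume R: "R \<in> Qs G D (Suc k) p b"
      have "length R = 2"
      proof (rule ccontr)
        assume "length R \<noteq> 2"
        then have "length R \<ge> 3" using R by (simp add: Qs_def)
        then have "butlast (tl R) ! 0 = R ! 1" by (simp add: nth_butlast nth_tl)
        moreover have "length (butlast (tl R)) > 0" using \<open>length R \<ge> 3\<close> by simp
        ultimately have "R ! 1 \<in> set (butlast (tl R))" using nth_mem[of 0 "butlast (tl R)"] by simp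
        moreover have "R ! 1 = b" using R by (simp add: Qs_def)
        ultimately have "b \<in> set (butlast (tl R))" by simp
        then show False using R True by (auto simp: Qs_def)
      qed
      then have "R = [R ! 0, R ! 1]" by (simp add: list_eq_iff_nth_eq nth_Cons split: nat.split)
      moreover have "R ! 0 = p" "R ! 1 = b" proof -
        have "R \<noteq> []" using \<open>length R = 2\<close> by auto
        then show "R ! 0 = p" "R ! 1 = b" using R hd_conv_nth[of R] by (auto simp: Qs_def)
      qed
      ultimately show "R \<in> {[p,b]}" by simp
    qed
    then have "(\<Sum>R\<in>Qs G D (Suc k) p b. gg R) \<le> (\<Sum>R\<in>{[p,b]}. gg R)"
      by (intro sum_mono2) (auto simp: gg_def)
    then show ?thesis by (simp add: gg_def)
  next
    case False
    define N where "N = {c. (b,c) \<in> edges G} - {p}"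
    have finN: "finite N" using wf unfolding N_def
      by (auto simp: wf_graph_def intro: finite_subset[of _ "verts G"])
    have cN: "card N \<le> 2" unfolding N_def using card_nb[OF wf sc Suc.prems] .
    let ?Q = "Qs G D (Suc k) p b"
    have key: "\<And>R. R \<in> ?Q \<Longrightarrow> length R \<ge> 3 \<and> tl R \<in> Qs G D k b (R ! 2) \<and> R ! 2 \<in> N
               \<and> gg R = gg (tl R) / 2"
    proof -
      fix R assume R: "R \<in> ?Q"
      have g: "gpath G R" and l2: "length R \<ge> 2" and lk: "length R \<le> Suc k" and h: "hd R = p"
        and r1: "R ! 1 = b" and lD: "last R \<in> D" and int: "set (butlast (tl R)) \<inter> D = {}"
        using R by (auto simp: Qs_def)
      have l3: "length R \<ge> 3"
      proof (rule ccontr)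
        assume "\<not> 3 \<le> length R"
        then have "length R = 2" using l2 by simp
        moreover have "R \<noteq> []" using l2 by auto
        ultimately have "last R = R ! 1" using last_conv_nth[of R] by simp
        then show False using lD r1 False by simp
      qed
      have gt: "gpath G (tl R)" using gpath_drop[OF g, of 1] l3 by (simp add: drop_Suc)
      have "tl R \<in> Qs G D k b (R ! 2)"
      proof -
        have tne: "tl R \<noteq> []" using l3 by (cases R) auto
        have "hd (tl R) = b" using tne r1 l3 by (simp add: hd_conv_nth nth_tl)
        moreover have "tl R ! 1 = R ! 2" using l3 by (simp add: nth_tl numeral_2_eq_2)
        moreover have "last (tl R) \<in> D" using lD tne by (simp add: last_tl)
        moreover have "set (butlast (tl (tl R))) \<subseteq> set (butlast (tl R))"
          unfolding butlast_tl by (cases "tl (butlast R)") auto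
        ultimately show ?thesis unfolding Qs_def using gt l3 lk int by auto
      qed
      moreover have "R ! 2 \<in> N"
      proof -
        have "(R ! 1, R ! 2) \<in> edges G" using g l3 by (auto simp: gpath_def numeral_2_eq_2)
        moreover have "R ! 2 \<noteq> R ! 0" using g l3 by (auto simp: gpath_def nth_eq_iff_index_eq numeral_2_eq_2)
        moreover have "R ! 0 = p" using h g by (simp add: hd_conv_nth gpath_def)
        ultimately show ?thesis using r1 by (auto simp: N_def)
      qed
      moreover have "gg R = gg (tl R) / 2"
      proof -
        have "length R - 2 = Suc (length (tl R) - 2)" using l3 by simp
        then show ?thesis unfolding gg_def by simp
      qed
      ultimately show "length R \<ge> 3 \<and> tl R \<in> Qs G D k b (R ! 2) \<and> R ! 2 \<in> N
               \<and> gg R = gg (tl R) / 2" using l3 by simp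
    qed
    have inj: "inj_on tl ?Q"
    proof
      fix R S assume "R \<in> ?Q" "S \<in> ?Q" "tl R = tl S"
      moreover have "R \<noteq> []" "S \<noteq> []" using \<open>R \<in> ?Q\<close> \<open>S \<in> ?Q\<close> by (auto simp: Qs_def)
      moreover have "hd R = hd S" using \<open>R \<in> ?Q\<close> \<open>S \<in> ?Q\<close> by (simp add: Qs_def)
      ultimately show "R = S" by (metis hd_Cons_tl)
    qed
    have sub: "tl ` ?Q \<subseteq> (\<Union>c\<in>N. Qs G D k b c)" using key by blast
    have disj: "\<forall>i\<in>N. \<forall>j\<in>N. i \<noteq> j \<longrightarrow> Qs G D k b i \<inter> Qs G D k b j = {}"
      by (auto simp: Qs_def)
    have "(\<Sum>R\<in>?Q. gg R) = (\<Sum>R\<in>?Q. gg (tl R) / 2)"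
      by (rule sum.cong) (use key in blast)+
    also have "\<dots> = (\<Sum>S\<in>tl ` ?Q. gg S / 2)" using sum.reindex[OF inj, of "\<lambda>S. gg S / 2"] by simp
    also have "\<dots> \<le> (\<Sum>S\<in>(\<Union>c\<in>N. Qs G D k b c). gg S / 2)"
      using sub finN finite_Qs[OF wf] by (intro sum_mono2) (auto simp: gg_def)
    also have "\<dots> = (\<Sum>c\<in>N. \<Sum>S\<in>Qs G D k b c. gg S / 2)"
      using finN finite_Qs[OF wf] disj by (intro sum.UNION_disjoint) auto
    also have "\<dots> \<le> (\<Sum>c\<in>N. 1/2)"
    proof (intro sum_mono)
      fix c assume "c \<in> N"
      then have "(c,b) \<in> edges G" using sy by (auto simp: N_def sym_def)
      then have "(\<Sum>S\<in>Qs G D k b c. gg S) \<le> 1" using Suc.IH by blast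
      then show "(\<Sum>S\<in>Qs G D k b c. gg S / 2) \<le> 1/2" by (simp add: sum_divide_distrib[symmetric])
    qed
    also have "\<dots> \<le> 1" using cN by simp
    finally show ?thesis .
  qed
qed



lemma set_butlast_tl: "set (butlast (tl xs)) = {xs ! j |j. 0 < j \<and> j < length xs - 1}"
proof (rule set_eqI, rule iffI)
  fix z assume "z \<in> set (butlast (tl xs))"
  then obtain j where j: "j < length (butlast (tl xs))" "butlast (tl xs) ! j = z"
    by (auto simp: in_set_conv_nth)
  then have "z = xs ! Suc j" by (simp add: nth_butlast nth_tl)
  then show "z \<in> {xs ! j |j. 0 < j \<and> j < length xs - 1}" using j by force
next
  fix z assume "z \<in> {xs ! j |j. 0 < j \<and> j < length xs - 1}"
  then obtain j where j: "0 < j" "j < length xs - 1" "z = xs ! j" by blast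
  then obtain k where k: "j = Suc k" by (cases j) auto
  then have "butlast (tl xs) ! k = z" using j by (simp add: nth_butlast nth_tl)
  moreover have "k < length (butlast (tl xs))" using j k by simp
  ultimately show "z \<in> set (butlast (tl xs))" by (metis nth_mem)
qed

lemma blt_sub: "set (butlast (tl Q)) \<subseteq> set Q"
  by (cases Q) (auto dest: in_set_butlastD)

lemma gamma_min:
  assumes t: "is_tree G"
  shows "\<exists>D. exp_dominating G D \<and> card D = gamma_e G"
    and "exp_dominating G D \<Longrightarrow> gamma_e G \<le> card D"
proof -
  have fin: "finite (verts G)" using t by (simp add: is_tree_def wf_graph_def)
  have "exp_dominating G (verts G)"
    unfolding exp_dominating_def using dweight_self[OF fin] by force
  then have ne: "card ` {D. exp_dominating G D} \<noteq> {}" by blast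
  have "card ` {D. exp_dominating G D} \<subseteq> card ` Pow (verts G)"
    unfolding exp_dominating_def by auto
  then have fi: "finite (card ` {D. exp_dominating G D})" using fin finite_subset by blast
  show "\<exists>D. exp_dominating G D \<and> card D = gamma_e G"
    using Min_in[OF fi ne] unfolding gamma_e_def by auto
  show "exp_dominating G D \<Longrightarrow> gamma_e G \<le> card D"
    unfolding gamma_e_def using Min_le[OF fi] by blast
qed

locale leafctx =
  fixes T :: "'a graph" and x y
  assumes tree: "is_tree T" and sc: "subcubic T" and xv: "x \<in> verts T"
    and lf: "\<And>w. (x,w) \<in> edges T \<longleftrightarrow> w = y"
begin

lemma wf: "wf_graph T" and ac: "acyclic_graph T" and sy: "sym (edges T)"
  and fin: "finite (verts T)"
  using tree by (auto simp: is_tree_def wf_graph_def)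

lemma tree2: "is_tree (rem T x)" using tree_rem[OF tree xv lf] .

lemma wf2: "wf_graph (rem T x)" and ac2: "acyclic_graph (rem T x)"
  using tree2 by (auto simp: is_tree_def)

lemma xy: "(x,y) \<in> edges T" "(y,x) \<in> edges T" "y \<in> verts T" "y \<noteq> x"
proof -
  show e: "(x,y) \<in> edges T" using lf by simp
  then show "(y,x) \<in> edges T" using sy by (simp add: sym_def)
  show "y \<in> verts T" using e wf by (auto simp: wf_graph_def)
  show "y \<noteq> x" using e wf by (auto simp: wf_graph_def irrefl_def)
qed

lemma notin: "u \<noteq> x \<Longrightarrow> v \<noteq> x \<Longrightarrow> gpath T Q \<Longrightarrow> hd Q = u \<Longrightarrow> last Q = v \<Longrightarrow> x \<notin> set Q"
  using leaf_notin[OF wf lf] by blast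

lemma case1:
  assumes D: "exp_dominating T D" and xD: "x \<notin> D"
  shows "exp_dominating (rem T x) D"
proof -
  have DV: "D \<subseteq> verts T" using D by (simp add: exp_dominating_def)
  have "dweight (rem T x) D u = dweight T D u" if u: "u \<in> verts T" "u \<noteq> x" for u
    unfolding dweight_def
  proof (rule sum.cong[OF refl])
    fix v assume v: "v \<in> D"
    have "{Q. dpath (rem T x) D u v Q} = {Q. dpath T D u v Q}"
      using notin[of u v] u v xD by (auto simp: dpath_def gpath_rem)
    then have "ddist (rem T x) D u v = ddist T D u v" unfolding ddist_def by simp
    then show "(case ddist (rem T x) D u v of enat d \<Rightarrow> (1 / 2) powi (int d - 1) | \<infinity> \<Rightarrow> 0) =
          (case ddist T D u v of enat d \<Rightarrow> (1 / 2) powi (int d - 1) | \<infinity> \<Rightarrow> 0)" by simp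
  qed
  then show ?thesis using D xD unfolding exp_dominating_def by auto
qed

lemma case2:
  assumes D: "exp_dominating T D" and xD: "x \<in> D" and yD: "y \<in> D"
  shows "exp_dominating (rem T x) (D - {x})"
proof -
  have DV: "D \<subseteq> verts T" using D by (simp add: exp_dominating_def)
  have finD: "finite D" using DV fin finite_subset by blast
  have "dweight (rem T x) (D - {x}) u \<ge> 1" if u: "u \<in> verts T" "u \<noteq> x" for u
  proof -
    have eqv: "tm (rem T x) (D - {x}) u v = tm T D u v" if v: "v \<in> D - {x}" for v
    proof -
      have e1: "{u, v} \<inter> (D - {x}) = {u,v} \<inter> D" using u v by auto
      have "dpath (rem T x) (D - {x}) u v Q \<longleftrightarrow> dpath T D u v Q" for Q
      proof (cases "x \<in> set Q")
        case True
        then show ?thesis using notin[of u v Q] u v by (auto simp: dpath_def gpath_rem)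
      next
        case False
        then have e2: "set (butlast (tl Q)) \<inter> (D - {x}) = set (butlast (tl Q)) \<inter> D"
          using blt_sub[of Q] by auto
        have l: "dpath (rem T x) (D - {x}) u v Q \<longleftrightarrow> gpath T Q \<and> hd Q = u \<and> last Q = v
           \<and> card ({u,v} \<inter> (D-{x})) = 1 \<and> set (butlast (tl Q)) \<inter> (D-{x}) = {}"
          unfolding dpath_def gpath_rem using False by auto
        have r: "dpath T D u v Q \<longleftrightarrow> gpath T Q \<and> hd Q = u \<and> last Q = v
           \<and> card ({u,v} \<inter> D) = 1 \<and> set (butlast (tl Q)) \<inter> D = {}"
          unfolding dpath_def by auto
        show ?thesis unfolding l r e1 e2 ..
      qed
      then have "{Q. dpath (rem T x) (D - {x}) u v Q} = {Q. dpath T D u v Q}" by simp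
      then show ?thesis unfolding tm_def ddist_def by simp
    qed
    have tx: "tm T D u x = 0"
    proof (rule tm_none, rule notI)
      assume "\<exists>R. dpath T D u x R"
      then obtain R where R: "dpath T D u x R" by blast
      then have g: "gpath T R" and h: "hd R = u" and l: "last R = x"
        and c: "card ({hd R, last R} \<inter> D) = 1" and int: "set (butlast (tl R)) \<inter> D = {}"
        by (auto simp: dpath_def)
      have ne: "R \<noteq> []" using g by (simp add: gpath_def)
      have l2: "length R \<ge> 2"
      proof (rule ccontr)
        assume "\<not> 2 \<le> length R"
        moreover have "length R \<noteq> 0" using ne by simp
        ultimately have "length R = 1" by linarith
        then have "hd R = last R" by (cases R) auto
        then show False using h l u by simp
      qed
      have "(R ! (length R - 2), R ! (length R - 1)) \<in> edges T"
      proof -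
        have "Suc (length R - 2) < length R" "Suc (length R - 2) = length R - 1" using l2 by auto
        then show ?thesis using g unfolding gpath_def by metis
      qed
      moreover have "R ! (length R - 1) = x" using l ne by (simp add: last_conv_nth)
      ultimately have ry: "R ! (length R - 2) = y" using lf sy by (auto simp: sym_def)
      show False
      proof (cases "length R = 2")
        case True
        then have "hd R = y" using ry ne by (simp add: hd_conv_nth)
        then have "{hd R, last R} \<inter> D = {y, x}" using l xD yD by auto
        then show False using c xy(4) by simp
      next
        case False
        then have "y \<in> set (butlast (tl R))" unfolding set_butlast_tl using l2 ry
          by (auto intro!: exI[of _ "length R - 2"])
        then show False using int yD by blast
      qed
    qed
    have "1 \<le> dweight T D u" using D u by (simp add: exp_dominating_def)
    also have "\<dots> = tm T D u x + (\<Sum>v\<in>D - {x}. tm T D u v)"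
      unfolding dweight_tm using sum.remove[OF finD xD] by simp
    also have "\<dots> = dweight (rem T x) (D - {x}) u" unfolding dweight_tm using tx eqv by simp
    finally show ?thesis .
  qed
  then show ?thesis using DV unfolding exp_dominating_def by auto
qed

end



context leafctx begin

lemma prefix_y:
  assumes DV: "D \<subseteq> verts T" and xD: "x \<in> D" and yD: "y \<notin> D"
    and u: "u \<notin> D" "u \<noteq> x" "u \<noteq> y" and v: "v \<noteq> x"
    and Q: "dpath T D u v Q" and i: "i < length Q" "Q ! i = y"
  shows "dpath (rem T x) (insert y (D - {x})) u y (take (Suc i) Q)" "0 < i" "i < length Q - 1"
proof -
  have g: "gpath T Q" and h: "hd Q = u" and l: "last Q = v" and vD: "v \<in> D"
    and int: "set (butlast (tl Q)) \<inter> D = {}"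
    using Q u by (auto simp: dpath_def split: if_splits)
  have ne: "Q \<noteq> []" using g by (simp add: gpath_def)
  have dQ: "distinct Q" using g by (simp add: gpath_def)
  have xQ: "x \<notin> set Q" using notin[OF u(2) v g h l] .
  show i0: "0 < i"
  proof (rule ccontr)
    assume "\<not> 0 < i" then have "i = 0" by simp
    then show False using i h ne u(3) by (simp add: hd_conv_nth)
  qed
  show il: "i < length Q - 1"
  proof (rule ccontr)
    assume "\<not> i < length Q - 1" then have "i = length Q - 1" using i by simp
    then show False using i l ne v yD vD by (simp add: last_conv_nth) 
  qed
  let ?P = "take (Suc i) Q"
  have gP: "gpath (rem T x) ?P" using gpath_take[OF g, of "Suc i"] xQ
    by (auto simp: gpath_rem dest: in_set_takeD)
  have hP: "hd ?P = u" using h by simp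
  have lP: "last ?P = y" using i by (simp add: take_Suc_conv_app_nth)
  have cP: "{hd ?P, last ?P} \<inter> insert y (D - {x}) = {y}" using hP lP u by auto
  have iP: "set (butlast (tl ?P)) \<inter> insert y (D - {x}) = {}"
  proof -
    have "z \<notin> insert y (D - {x})" if z: "z \<in> set (butlast (tl ?P))" for z
    proof -
      obtain j where j: "0 < j" "j < length ?P - 1" "z = ?P ! j"
        using z unfolding set_butlast_tl by blast
      have ji: "j < i" using j i by simp
      have zq: "z = Q ! j" using j ji by simp
      have "z \<in> set (butlast (tl Q))" unfolding set_butlast_tl using j ji il zq by auto
      then have "z \<notin> D" using int by blast
      moreover have "z \<noteq> y" using zq nth_eq_iff_index_eq[OF dQ, of j i] ji i by auto
      ultimately show ?thesis by simp
    qed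
    then show ?thesis by blast
  qed
  have cP1: "card ({hd ?P, last ?P} \<inter> insert y (D - {x})) = 1" unfolding cP by simp
  show "dpath (rem T x) (insert y (D - {x})) u y ?P"
    unfolding dpath_def using gP hP lP cP1 iP by blast
qed

lemma prefix_x:
  assumes DV: "D \<subseteq> verts T" and xD: "x \<in> D" and yD: "y \<notin> D"
    and u: "u \<notin> D" "u \<noteq> x" "u \<noteq> y"
    and R: "dpath T D u x R"
  shows "dpath (rem T x) (insert y (D - {x})) u y (butlast R)" "length R = Suc (length (butlast R))"
proof -
  have g: "gpath T R" and h: "hd R = u" and l: "last R = x"
    and int: "set (butlast (tl R)) \<inter> D = {}"
    using R by (auto simp: dpath_def)
  have ne: "R \<noteq> []" using g by (simp add: gpath_def)
  have dR: "distinct R" using g by (simp add: gpath_def)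
  have l2: "length R \<ge> 2"
  proof (rule ccontr)
    assume "\<not> 2 \<le> length R"
    moreover have "length R \<noteq> 0" using ne by simp
    ultimately have "length R = 1" by linarith
    then have "hd R = last R" by (cases R) auto
    then show False using h l u by simp
  qed
  show "length R = Suc (length (butlast R))" using l2 by simp
  have "(R ! (length R - 2), R ! (length R - 1)) \<in> edges T"
  proof -
    have "Suc (length R - 2) < length R" "Suc (length R - 2) = length R - 1" using l2 by auto
    then show ?thesis using g unfolding gpath_def by metis
  qed
  moreover have "R ! (length R - 1) = x" using l ne by (simp add: last_conv_nth)
  ultimately have ry: "R ! (length R - 2) = y" using lf sy by (auto simp: sym_def)
  let ?P = "butlast R"
  have Pe: "?P = take (length R - 1) R" by (simp add: butlast_conv_take)
  have xP: "x \<notin> set ?P" using dR l ne by (metis append_butlast_last_id distinct_append not_distinct_conv_prefix)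
  have gP: "gpath (rem T x) ?P" using gpath_take[OF g, of "length R - 1"] xP l2 Pe
    by (auto simp: gpath_rem)
  have hP: "hd ?P = u" using h l2 Pe by simp
  have lP: "last ?P = y"
  proof -
    have bne: "?P \<noteq> []" using l2 by (cases R) auto
    have "length ?P - 1 = length R - 2" by simp
    then have "last ?P = ?P ! (length R - 2)" using bne last_conv_nth[of ?P] by simp
    also have "\<dots> = R ! (length R - 2)" using l2 by (simp add: nth_butlast)
    finally show ?thesis using ry by simp
  qed
  have cP: "{hd ?P, last ?P} \<inter> insert y (D - {x}) = {y}" using hP lP u by auto
  have iP: "set (butlast (tl ?P)) \<inter> insert y (D - {x}) = {}"
  proof -
    have "z \<notin> insert y (D - {x})" if z: "z \<in> set (butlast (tl ?P))" for z
    proof -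
      obtain j where j: "0 < j" "j < length ?P - 1" "z = ?P ! j"
        using z unfolding set_butlast_tl by blast
      have zq: "z = R ! j" using j by (simp add: nth_butlast)
      have jR: "0 < j \<and> j < length R - 1" using j by simp
      have "z \<in> set (butlast (tl R))" unfolding set_butlast_tl using zq jR by blast
      then have "z \<notin> D" using int by blast
      moreover have "z \<noteq> y"
      proof -
        have "j < length R" "length R - 2 < length R" "j \<noteq> length R - 2" using j l2 by auto
        then show ?thesis using zq ry nth_eq_iff_index_eq[OF dR, of j "length R - 2"] by auto
      qed
      ultimately show ?thesis by simp
    qed
    then show ?thesis by blast
  qed
  have cP1: "card ({hd ?P, last ?P} \<inter> insert y (D - {x})) = 1" unfolding cP by simp
  show "dpath (rem T x) (insert y (D - {x})) u y ?P"
    unfolding dpath_def using gP hP lP cP1 iP by blast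
qed

end



context leafctx begin

lemma sum_A_bound:
  assumes DV: "D \<subseteq> verts T" and xD: "x \<in> D" and yD: "y \<notin> D"
    and u: "u \<notin> D" "u \<noteq> x" "u \<noteq> y"
    and P: "dpath (rem T x) (insert y (D - {x})) u y P"
    and A: "A = {v \<in> D - {x}. \<exists>Q. dpath T D u v Q \<and> y \<in> set Q}"
  shows "(\<Sum>v\<in>A. tm T D u v) \<le> (1/2)^(length P - 1)"
proof -
  define D' where "D' = insert y (D - {x})"
  define K where "K = card (verts T)"
  define h where "h = (1/2::real)^(length P - 1)"
  have gP: "gpath (rem T x) P" and hP: "hd P = u" and lP: "last P = y"
    using P by (auto simp: dpath_def)
  have Pne: "P \<noteq> []" using gP by (simp add: gpath_def)
  have xP: "x \<notin> set P" and gPT: "gpath T P" using gP by (auto simp: gpath_rem)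
  have lP2: "length P \<ge> 2"
  proof (rule ccontr)
    assume "\<not> 2 \<le> length P"
    moreover have "length P \<noteq> 0" using Pne by simp
    ultimately have "length P = 1" by linarith
    then have "hd P = last P" by (cases P) auto
    then show False using hP lP u by simp
  qed
  define a where "a = P ! (length P - 2)"
  have aE: "(a, y) \<in> edges T"
  proof -
    have "Suc (length P - 2) < length P" "Suc (length P - 2) = length P - 1" using lP2 by auto
    moreover have "P ! (length P - 1) = y" using lP Pne by (simp add: last_conv_nth)
    ultimately show ?thesis using gPT unfolding gpath_def a_def by metis
  qed
  have "length P - 2 < length P" using lP2 by simp
  then have ax: "a \<noteq> x" using xP nth_mem[of "length P - 2" P] unfolding a_def by auto
  define N' where "N' = {c. (y,c) \<in> edges T} - {x, a}"
  have finN: "finite {c. (y,c) \<in> edges T}"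
    using wf by (auto simp: wf_graph_def intro: finite_subset[of _ "verts T"])
  have cN: "card N' \<le> 1"
  proof -
    have "card {c. (y,c) \<in> edges T} \<le> 3" using sc xy(3) by (auto simp: subcubic_def)
    moreover have "{x, a} \<subseteq> {c. (y,c) \<in> edges T}" using xy(2) aE sy
      by (auto simp: sym_def)
    moreover have "card {x, a} = 2" using ax by simp
    moreover have "card N' = card {c. (y,c) \<in> edges T} - card {x, a}"
      unfolding N'_def using card_Diff_subset[OF _ \<open>{x, a} \<subseteq> _\<close>] by simp
    ultimately show ?thesis by linarith
  qed
  define Qf where "Qf v = (SOME Q. dpath T D u v Q \<and> y \<in> set Q)" for v
  define Rf where "Rf v = drop (length P - 1) (Qf v)" for v
  have key: "tm T D u v = h * gg (Rf v) \<and> Rf v \<in> Qs T D K y (Rf v ! 1) \<and> Rf v ! 1 \<in> N'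
      \<and> last (Rf v) = v" if vA: "v \<in> A" for v
  proof -
    have "\<exists>Q. dpath T D u v Q \<and> y \<in> set Q" using vA A by auto
    then have Q: "dpath T D u v (Qf v)" "y \<in> set (Qf v)" unfolding Qf_def by (metis (mono_tags, lifting) someI_ex)+
    define Q where "Q = Qf v"
    have vD: "v \<in> D" "v \<noteq> x" using vA A by auto
    obtain i where i: "i < length Q" "Q ! i = y" using Q by (auto simp: Q_def in_set_conv_nth)
    note pf = prefix_y[OF DV xD yD u vD(2) Q(1)[folded Q_def] i]
    have gQ: "gpath T Q" and hQ: "hd Q = u" and lQ: "last Q = v"
      and intQ: "set (butlast (tl Q)) \<inter> D = {}" using Q by (auto simp: Q_def dpath_def)
    have dQ: "distinct Q" using gQ by (simp add: gpath_def)
    have Qne: "Q \<noteq> []" using gQ by (simp add: gpath_def)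
    have xQ: "x \<notin> set Q" using notin[OF u(2) vD(2) gQ hQ lQ] .
    have "take (Suc i) Q = P"
      using path_unique[OF wf2 ac2, of "take (Suc i) Q" P] pf(1) P by (auto simp: dpath_def)
    then have iP: "i = length P - 1" using i by auto
    have RQ: "Rf v = drop i Q" unfolding Rf_def Q_def iP ..
    have lR: "length (Rf v) = length Q - i" using RQ by simp
    have lR2: "length (Rf v) \<ge> 2" using lR pf(3) by simp
    have lQ2: "length Q \<ge> 2" using pf(2,3) by simp
    have "tm T D u v = (1/2)^(length Q - 2)" using tm_path[OF wf ac Q(1)[folded Q_def] lQ2] .
    also have "\<dots> = (1/2)^i * (1/2)^(length Q - i - 2)"
    proof -
      have "length Q - 2 = i + (length Q - i - 2)" using pf(3) by simp
      then show ?thesis by (metis power_add)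
    qed
    also have "\<dots> = h * gg (Rf v)" unfolding h_def gg_def lR iP by simp
    finally have ta: "tm T D u v = h * gg (Rf v)" .
    have gR: "gpath T (Rf v)" using gpath_drop[OF gQ i(1)] RQ by simp
    have hR: "hd (Rf v) = y" using RQ i by (simp add: hd_drop_conv_nth)
    have lRv: "last (Rf v) = v" using RQ i lQ by simp
    have "set Q \<subseteq> verts T" using gQ by (simp add: gpath_def)
    then have "length Q \<le> K" unfolding K_def using distinct_card[OF dQ] card_mono[OF fin] by metis
    then have lRK: "length (Rf v) \<le> K" using lR by simp
    have intR: "set (butlast (tl (Rf v))) \<inter> D = {}"
    proof -
      have "set (butlast (tl (Rf v))) \<subseteq> set (butlast (tl Q))"
      proof
        fix z assume "z \<in> set (butlast (tl (Rf v)))"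
        then obtain j where j: "0 < j" "j < length (Rf v) - 1" "z = Rf v ! j"
          unfolding set_butlast_tl by blast
        have "z = Q ! (i + j)" using j RQ i by simp
        moreover have "0 < i + j \<and> i + j < length Q - 1" using j lR pf(2) by simp
        ultimately show "z \<in> set (butlast (tl Q))" unfolding set_butlast_tl by blast
      qed
      then show ?thesis using intQ by blast
    qed
    have Rq: "Rf v \<in> Qs T D K y (Rf v ! 1)"
      unfolding Qs_def using gR lR2 lRK hR lRv vD intR by simp
    have r1: "Rf v ! 1 = Q ! Suc i" using RQ pf(3) by simp
    have "(Q ! i, Q ! Suc i) \<in> edges T" using gQ pf(3) by (simp add: gpath_def)
    then have e1: "(y, Rf v ! 1) \<in> edges T" using i r1 by simp
    have "Suc i < length Q" using pf(3) by simp
    then have n1: "Rf v ! 1 \<noteq> x" using xQ r1 nth_mem[of "Suc i" Q] by auto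
    have aq: "a = Q ! (i - 1)"
    proof -
      have "a = take (Suc i) Q ! (i - 1)" unfolding a_def using \<open>take (Suc i) Q = P\<close> iP by (simp add: numeral_2_eq_2)
      then show ?thesis using pf(2) by simp
    qed
    have n2: "Rf v ! 1 \<noteq> a"
    proof -
      have "Suc i < length Q" "i - 1 < length Q" "Suc i \<noteq> i - 1" using pf(2,3) by auto
      then show ?thesis using r1 aq nth_eq_iff_index_eq[OF dQ, of "Suc i" "i - 1"] by auto
    qed
    have "Rf v ! 1 \<in> N'" unfolding N'_def using e1 n1 n2 by simp
    then show ?thesis using ta Rq lRv by simp
  qed
  note keya = key[THEN conjunct1] and keyb = key[THEN conjunct2, THEN conjunct1]
    and keyc = key[THEN conjunct2, THEN conjunct2, THEN conjunct1]
    and keyd = key[THEN conjunct2, THEN conjunct2, THEN conjunct2]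
  have "A \<subseteq> verts T" using A DV by auto
  then have finA: "finite A" using fin finite_subset by blast
  have inj: "inj_on Rf A"
  proof (rule inj_onI)
    fix v w assume "v \<in> A" "w \<in> A" "Rf v = Rf w"
    then show "v = w" using keyd[of v] keyd[of w] by metis
  qed
  have sub: "Rf ` A \<subseteq> (\<Union>c\<in>N'. Qs T D K y c)"
  proof
    fix R assume "R \<in> Rf ` A"
    then obtain v where v: "v \<in> A" "R = Rf v" by blast
    then show "R \<in> (\<Union>c\<in>N'. Qs T D K y c)" using keyb[OF v(1)] keyc[OF v(1)] by blast
  qed
  have finN': "finite N'" unfolding N'_def using finN by simp
  have disj: "\<forall>i\<in>N'. \<forall>j\<in>N'. i \<noteq> j \<longrightarrow> Qs T D K y i \<inter> Qs T D K y j = {}"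
    by (auto simp: Qs_def)
  have "(\<Sum>v\<in>A. tm T D u v) = (\<Sum>v\<in>A. h * gg (Rf v))"
    by (rule sum.cong[OF refl]) (rule keya)
  also have "\<dots> = h * (\<Sum>v\<in>A. gg (Rf v))" by (simp only: sum_distrib_left)
  also have "\<dots> = h * (\<Sum>R\<in>Rf ` A. gg R)"
    using sum.reindex[OF inj, of gg] by (simp only: comp_def)
  also have "\<dots> \<le> h * (\<Sum>R\<in>(\<Union>c\<in>N'. Qs T D K y c). gg R)"
    using sub finN' finite_Qs[OF wf] unfolding h_def
    by (intro mult_left_mono sum_mono2) (auto simp: gg_def)
  also have "\<dots> = h * (\<Sum>c\<in>N'. \<Sum>R\<in>Qs T D K y c. gg R)"
    using finN' finite_Qs[OF wf] disj by (subst sum.UNION_disjoint) auto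
  also have "\<dots> \<le> h * (\<Sum>c\<in>N'. 1)"
  proof (intro mult_left_mono sum_mono)
    fix c assume "c \<in> N'"
    then have "(c,y) \<in> edges T" using sy by (auto simp: N'_def sym_def)
    then show "(\<Sum>R\<in>Qs T D K y c. gg R) \<le> 1" using kraft[OF wf sc] by blast
  qed (simp add: h_def)
  also have "\<dots> \<le> h" using cN by (simp add: h_def mult_left_le)
  finally show ?thesis unfolding h_def .
qed

end



context leafctx begin

lemma case3:
  assumes D: "exp_dominating T D" and xD: "x \<in> D" and yD: "y \<notin> D"
  shows "exp_dominating (rem T x) (insert y (D - {x}))"
proof -
  define D' where "D' = insert y (D - {x})"
  have DV: "D \<subseteq> verts T" using D by (simp add: exp_dominating_def)
  have finD: "finite D" using DV fin finite_subset by blast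
  have finD': "finite D'" using finD by (simp add: D'_def)
  have D'V: "D' \<subseteq> verts (rem T x)" using DV xy by (auto simp: D'_def)
  have "dweight (rem T x) D' u \<ge> 1" if u: "u \<in> verts T" "u \<noteq> x" for u
  proof (cases "u \<in> D'")
    case True
    have uv: "u \<in> verts (rem T x)" using u by simp
    have "2 \<le> dweight (rem T x) D' u" by (rule dweight_self[OF finD' True uv])
    then show ?thesis by linarith
  next
    case False
    then have uD: "u \<notin> D" "u \<noteq> y" using u by (auto simp: D'_def)
    define A where "A = {v \<in> D - {x}. \<exists>Q. dpath T D u v Q \<and> y \<in> set Q}"
    have AD: "A \<subseteq> D - {x}" by (auto simp: A_def)
    have F1: "tm T D u v \<le> tm (rem T x) D' u v" if v: "v \<in> D - {x} - A" for v
    proof (cases "\<exists>Q. dpath T D u v Q")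
      case True
      then obtain Q where Q: "dpath T D u v Q" by blast
      have yQ: "y \<notin> set Q" using Q v by (auto simp: A_def)
      have g: "gpath T Q" and h: "hd Q = u" and l: "last Q = v"
        and int: "set (butlast (tl Q)) \<inter> D = {}" using Q by (auto simp: dpath_def)
      have xQ: "x \<notin> set Q" using notin[OF u(2) _ g h l] v by simp
      have c: "{hd Q, last Q} \<inter> D' = {v}" using h l v False by (auto simp: D'_def)
      have c1: "card ({hd Q, last Q} \<inter> D') = 1" unfolding c by simp
      have i2: "set (butlast (tl Q)) \<inter> D' = {}"
        using int blt_sub[of Q] xQ yQ by (auto simp: D'_def)
      have Q2: "dpath (rem T x) D' u v Q"
        unfolding dpath_def gpath_rem using g xQ h l c1 i2 by simp
      have "tm T D u v = tm (rem T x) D' u v"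
        unfolding tm_def ddist_path[OF wf ac Q] ddist_path[OF wf2 ac2 Q2] ..
      then show ?thesis by simp
    next
      case False
      then show ?thesis using tm_none tm_nonneg by metis
    qed
    have star: "tm T D u x + (\<Sum>v\<in>A. tm T D u v) \<le> tm (rem T x) D' u y"
    proof (cases "\<exists>P. dpath (rem T x) D' u y P")
      case True
      then obtain P where P: "dpath (rem T x) D' u y P" by blast
      have gP: "gpath (rem T x) P" and hP: "hd P = u" and lP: "last P = y"
        using P by (auto simp: dpath_def)
      have Pne: "P \<noteq> []" using gP by (simp add: gpath_def)
      have lP2: "length P \<ge> 2"
      proof (rule ccontr)
        assume "\<not> 2 \<le> length P"
        moreover have "length P \<noteq> 0" using Pne by simp
        ultimately have "length P = 1" by linarith
        then have "hd P = last P" by (cases P) auto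
        then show False using hP lP uD by simp
      qed
      define h where "h = (1/2::real)^(length P - 1)"
      have t2: "tm (rem T x) D' u y = 2 * h"
      proof -
        have "tm (rem T x) D' u y = (1/2)^(length P - 2)" using tm_path[OF wf2 ac2 P lP2] .
        moreover have "length P - 1 = Suc (length P - 2)" using lP2 by simp
        ultimately show ?thesis unfolding h_def by simp
      qed
      have tx: "tm T D u x \<le> h"
      proof (cases "\<exists>R. dpath T D u x R")
        case True
        then obtain R where R: "dpath T D u x R" by blast
        note px = prefix_x[OF DV xD yD uD(1) u(2) uD(2) R]
        have "butlast R = P"
          using path_unique[OF wf2 ac2, of "butlast R" P] px(1)[folded D'_def] P by (auto simp: dpath_def)
        then have lR: "length R = Suc (length P)" using px(2) by simp
        then have "length R \<ge> 2" using lP2 by simp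
        then have "tm T D u x = (1/2)^(length R - 2)" using tm_path[OF wf ac R] by simp
        also have "\<dots> = h" unfolding h_def lR by simp
        finally show ?thesis by simp
      next
        case False
        then show ?thesis using tm_none[OF False] by (simp add: h_def)
      qed
      have sA: "(\<Sum>v\<in>A. tm T D u v) \<le> h"
        using sum_A_bound[OF DV xD yD uD(1) u(2) uD(2) P[unfolded D'_def] A_def] by (simp add: h_def)
      show ?thesis using t2 tx sA by simp
    next
      case False
      have t2: "tm (rem T x) D' u y = 0" using tm_none[OF False] .
      have tx: "tm T D u x = 0"
      proof (rule tm_none, rule notI)
        assume "\<exists>R. dpath T D u x R"
        then obtain R where R: "dpath T D u x R" by blast
        note px = prefix_x[OF DV xD yD uD(1) u(2) uD(2) R]
        then show False using False by (auto simp: D'_def)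
      qed
      have "A = {}"
      proof (rule ccontr)
        assume "A \<noteq> {}"
        then obtain v Q where v: "v \<in> D - {x}" and Q: "dpath T D u v Q" "y \<in> set Q"
          by (auto simp: A_def)
        obtain i where i: "i < length Q" "Q ! i = y" using Q(2) by (auto simp: in_set_conv_nth)
        have "v \<noteq> x" using v by simp
        note pf = prefix_y[OF DV xD yD uD(1) u(2) uD(2) this Q(1) i]
        then show False using False by (auto simp: D'_def)
      qed
      then show ?thesis using t2 tx by simp
    qed
    have "1 \<le> dweight T D u" using D u by (simp add: exp_dominating_def)
    also have "\<dots> = tm T D u x + (\<Sum>v\<in>D - {x}. tm T D u v)"
      unfolding dweight_tm using sum.remove[OF finD xD] by simp
    also have "(\<Sum>v\<in>D - {x}. tm T D u v) = (\<Sum>v\<in>D - {x} - A. tm T D u v) + (\<Sum>v\<in>A. tm T D u v)"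
      using sum.subset_diff[OF AD] finD by simp
    also have "tm T D u x + ((\<Sum>v\<in>D - {x} - A. tm T D u v) + (\<Sum>v\<in>A. tm T D u v))
        = (tm T D u x + (\<Sum>v\<in>A. tm T D u v)) + (\<Sum>v\<in>D - {x} - A. tm T D u v)" by simp
    also have "\<dots> \<le> tm (rem T x) D' u y + (\<Sum>v\<in>D - {x} - A. tm (rem T x) D' u v)"
      using star sum_mono[of "D - {x} - A" "tm T D u" "tm (rem T x) D' u"] F1 by simp
    also have "\<dots> \<le> tm (rem T x) D' u y + (\<Sum>v\<in>D - {x}. tm (rem T x) D' u v)"
      using finD by (simp add: sum_mono2 tm_nonneg)
    also have "\<dots> = dweight (rem T x) D' u"
      unfolding dweight_tm D'_def using finD yD by simp
    finally show ?thesis .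
  qed
  then show ?thesis using D'V unfolding exp_dominating_def D'_def by auto
qed

lemma step: "gamma_e (rem T x) \<le> gamma_e T"
proof -
  obtain D where D: "exp_dominating T D" "card D = gamma_e T" using gamma_min(1)[OF tree] by (elim exE conjE)
  have DV: "D \<subseteq> verts T" using D(1) by (simp add: exp_dominating_def)
  have finD: "finite D" using finite_subset[OF DV fin] .
  obtain D' where D': "exp_dominating (rem T x) D'" "card D' \<le> card D"
  proof (cases "x \<in> D")
    case False
    show ?thesis by (rule that[OF case1[OF D(1) False] order.refl])
  next
    case xD: True
    show ?thesis
    proof (cases "y \<in> D")
      case True
      show ?thesis by (rule that[OF case2[OF D(1) xD True] card_Diff1_le])
    next
      case False
      have "y \<notin> D - {x}" using False by simp
      then have "card (insert y (D - {x})) = Suc (card (D - {x}))" using finD by simp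
      also have "\<dots> = card D" using card_Suc_Diff1[OF finD xD] .
      finally have "card (insert y (D - {x})) \<le> card D" by simp
      then show ?thesis by (rule that[OF case3[OF D(1) xD False]])
    qed
  qed
  have "gamma_e (rem T x) \<le> card D'" by (rule gamma_min(2)[OF tree2 D'(1)])
  then show ?thesis using D'(2) D(2) by linarith
qed

end


lemma leaf_step:
  assumes "is_tree T" "subcubic T" "x \<in> verts T" "\<And>w. (x,w) \<in> edges T \<longleftrightarrow> w = y"
  shows "gamma_e (rem T x) \<le> gamma_e T"
  using leafctx.step[OF leafctx.intro[OF assms]] .

theorem lemma2:
  fixes T T' :: "'a graph"
  assumes "is_tree T" and "subcubic T" and "subtree T' T"
  shows "gamma_e T' \<le> gamma_e T"
proof -
  have "\<And>T. is_tree T \<Longrightarrow> subcubic T \<Longrightarrow> subtree T' T \<Longrightarrow> card (verts T - verts T') = n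
     \<Longrightarrow> gamma_e T' \<le> gamma_e T" for n
  proof (induction n)
    case 0
    have fin: "finite (verts T)" using 0 by (simp add: is_tree_def wf_graph_def)
    have "verts T' \<subseteq> verts T" using 0 by (simp add: subtree_def subgraph_def)
    then have "verts T' = verts T" using 0 fin by auto
    then have "T' = T" using spanning_eq[OF 0(1,3)] graph_eq by blast
    then show ?case by simp
  next
    case (Suc n)
    have fin: "finite (verts T)" using Suc by (simp add: is_tree_def wf_graph_def)
    have sub: "verts T' \<subseteq> verts T" using Suc by (simp add: subtree_def subgraph_def)
    then have "verts T' \<subset> verts T" using Suc.prems(4) by auto
    then obtain x y where x: "x \<in> verts T - verts T'" "\<And>w. (x,w) \<in> edges T \<longleftrightarrow> w = y"
      using leaf_exists[OF Suc.prems(1,3)] by blast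
    have wf: "wf_graph T" using Suc by (simp add: is_tree_def)
    have "card (verts (rem T x) - verts T') = n"
    proof -
      have "verts (rem T x) - verts T' = (verts T - verts T') - {x}" by auto
      then show ?thesis using Suc.prems(4) x fin by simp
    qed
    then have "gamma_e T' \<le> gamma_e (rem T x)"
      using Suc.IH tree_rem[OF Suc.prems(1)] subcubic_rem[OF wf Suc.prems(2)]
        subtree_rem[OF Suc.prems(3)] x by blast
    also have "\<dots> \<le> gamma_e T" using leaf_step[OF Suc.prems(1,2)] x by blast
    finally show ?case .
  qed
  then show ?thesis using assms by blast
qed


end
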